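(* Let $r>1$ and consider $\text{EMPMO}^{\text{SP}}_{\text{cons}}$ with box parameter $r$ (as in the context). Let $P$ be the population at some generation and $P'$ the population after the next generation. Let $\mathbf{x}=(v_1,\dots,v_i)$ be a path, let $P_i$ (resp. $P_i'$) be the set of paths in $P$ (resp. $P'$) whose target vertex is $v_i$, and let $j\ge0$. If there is $\mathbf{z}\in P_i$ with $F_m(\mathbf{z})\succeq_{r^j}F_m(\mathbf{x})$ for all $m\in\{1,2\}$, then there is $\mathbf{z}'\in P_i'$ with $F_m(\mathbf{z}')\succeq_{r^{j+1}}F_m(\mathbf{x})$ for all $m\in\{1,2\}$.
   Context: Instance: directed graph $G=(V,E)$, $n=|V|$, source vertex $s$; each edge $e$ has weight vectors $w_m(e)=(w_{m1}(e),\dots,w_{mk_m}(e))$ for parties $m=1,2$, all weights $\ge1$. A path is $(v_0=s,\dots,v_l)$ with consecutive vertices joined by edges, $l\le n-1$; target $v_l$. $f_{mk}$ is the sum of the $k$-th party-$m$ weights of the edges, $F_m=(f_{m1},\dots,f_{mk_m})$, minimized. For $\rho\ge1$ and paths $\mathbf{z},\mathbf{x}$ with the same target, $F_m(\mathbf{z})\succeq_\rho F_m(\mathbf{x})$ means $f_{mk}(\mathbf{z})\le\rho f_{mk}(\mathbf{x})$ for all $k$; $F_m(\mathbf{z})\succ F_m(\mathbf{x})$ means $f_{mk}(\mathbf{z})\le f_{mk}(\mathbf{x})$ for all $k$, strict for some $k$. Box index $b_r(F_m(\mathbf{x}))=(\lfloor\log_r f_{m1}(\mathbf{x})\rfloor,\dots,\lfloor\log_r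 f_{mk_m}(\mathbf{x})\rfloor)$; $b\succeq b'$ if componentwise $\le$, $b\succ b'$ if moreover strict somewhere; paths with different targets are incomparable. Mutation: with probability $1/2$ each, Add or Delete on $(v_0,\dots,v_l)$. Add: choose $v_i$, $0\le i\le l$, uniformly; if $i<l$ and some $v'$ has $(v_i,v'),(v',v_{i+1})\in E$, insert such a $v'$; if $i=l$ and some $v'$ has $(v_l,v')\in E$, append a uniformly random such $v'$. Delete: choose $v_i$, $1\le i\le l-1$, uniformly; if $i\le l-2$ and $(v_i,v_{i+2})\in E$, remove $v_{i+1}$; if $i=l-1$, the new path is $(v_0,\dots,v_{l-1})$. $\text{EMPMO}^{\text{SP}}_{\text{cons}}$: $P\leftarrow\{(s)\}$; each generation: choose $\mathbf{x}\in P$ uniformly, mutate to get $\mathbf{x}'$; if there exists a party $m$ such that no $\mathbf{z}\in P$ with the same target as $\mathbf{x}'$ satisfies $F_m(\mathbf{z})\succ F_m(\mathbf{x}')$ or $b_r(F_m(\mathbf{z}))\succ b_r(F_m(\mathbf{x}'))$, then $P\leftarrow(P\setminus\{\mathbf{z}\in P\text{ with the same target as }\mathbf{x}':\ b_r(F_{m'}(\mathbf{x}'))\succeq b_r(F_{m'}(\mathbf{z}))\text{ for both }m'\})\cup\{\mathbf{x}'\}$. *)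

theory Defs
  imports Complex_Main "HOL-Library.Extended_Real"
begin

(* Paths are vertex lists [v0,...,vl]; parties m \<in> {1,2}; objective components k < km m.
   w m e k is the k-th party-m weight of edge e. *)

definition is_path :: "'v set \<Rightarrow> ('v \<times> 'v) set \<Rightarrow> 'v \<Rightarrow> 'v list \<Rightarrow> bool" where
  "is_path V E s xs \<longleftrightarrow> xs \<noteq> [] \<and> hd xs = s \<and> length xs \<le> card V \<and>
     (\<forall>i. Suc i < length xs \<longrightarrow> (xs ! i, xs ! Suc i) \<in> E)"

definition obj :: "(nat \<Rightarrow> 'v \<times> 'v \<Rightarrow> nat \<Rightarrow> real) \<Rightarrow> nat \<Rightarrow> nat \<Rightarrow> 'v list \<Rightarrow> real" where
  "obj w m k xs = sum_list (map (\<lambda>e. w m e k) (zip xs (tl xs)))"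

(* k-th component of the box index; log_r 0 = -\<infinity> (only the trivial path (s) has value 0) *)
definition box :: "real \<Rightarrow> (nat \<Rightarrow> 'v \<times> 'v \<Rightarrow> nat \<Rightarrow> real) \<Rightarrow> nat \<Rightarrow> nat \<Rightarrow> 'v list \<Rightarrow> ereal" where
  "box r w m k xs = (if obj w m k xs = 0 then -\<infinity>
                     else ereal (real_of_int \<lfloor>log r (obj w m k xs)\<rfloor>))"

definition dom_strict :: "(nat \<Rightarrow> nat) \<Rightarrow> (nat \<Rightarrow> 'v \<times> 'v \<Rightarrow> nat \<Rightarrow> real) \<Rightarrow> nat \<Rightarrow> 'v list \<Rightarrow> 'v list \<Rightarrow> bool" where
  "dom_strict km w m z x \<longleftrightarrow> (\<forall>k<km m. obj w m k z \<le> obj w m k x) \<and> (\<exists>k<km m. obj w m k z < obj w m k x)"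

definition box_weak :: "real \<Rightarrow> (nat \<Rightarrow> nat) \<Rightarrow> (nat \<Rightarrow> 'v \<times> 'v \<Rightarrow> nat \<Rightarrow> real) \<Rightarrow> nat \<Rightarrow> 'v list \<Rightarrow> 'v list \<Rightarrow> bool" where
  "box_weak r km w m z x \<longleftrightarrow> (\<forall>k<km m. box r w m k z \<le> box r w m k x)"

definition box_strict :: "real \<Rightarrow> (nat \<Rightarrow> nat) \<Rightarrow> (nat \<Rightarrow> 'v \<times> 'v \<Rightarrow> nat \<Rightarrow> real) \<Rightarrow> nat \<Rightarrow> 'v list \<Rightarrow> 'v list \<Rightarrow> bool" where
  "box_strict r km w m z x \<longleftrightarrow> box_weak r km w m z x \<and> (\<exists>k<km m. box r w m k z < box r w m k x)"

definition approx_dom :: "real \<Rightarrow> (nat \<Rightarrow> nat) \<Rightarrow> (nat \<Rightarrow> 'v \<times> 'v \<Rightarrow> nat \<Rightarrow> real) \<Rightarrow> nat \<Rightarrow> 'v list \<Rightarrow> 'v list \<Rightarrow> bool" where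
  "approx_dom \<rho> km w m z x \<longleftrightarrow> (\<forall>k<km m. obj w m k z \<le> \<rho> * obj w m k x)"

definition mutations :: "('v \<times> 'v) set \<Rightarrow> 'v list \<Rightarrow> 'v list set" where
  "mutations E xs =
     \<comment> \<open>Add, i < l, insertion\<close>
     {take (Suc i) xs @ [v] @ drop (Suc i) xs | i v.
        Suc i < length xs \<and> (xs ! i, v) \<in> E \<and> (v, xs ! Suc i) \<in> E}
   \<union> \<comment> \<open>Add, i = l, append\<close>
     {xs @ [v] | v. (last xs, v) \<in> E}
   \<union> \<comment> \<open>Delete, 1 \<le> i \<le> l-2\<close>
     {take (Suc i) xs @ drop (Suc (Suc i)) xs | i.
        1 \<le> i \<and> Suc (Suc i) < length xs \<and> (xs ! i, xs ! Suc (Suc i)) \<in> E}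
   \<union> \<comment> \<open>Delete, i = l-1 \<ge> 1\<close>
     {butlast xs | u::unit. 3 \<le> length xs}
   \<union> \<comment> \<open>some random choice leaves the path unchanged\<close>
     {xs | u::unit.
        (\<exists>i. Suc i < length xs \<and> \<not> (\<exists>v. (xs ! i, v) \<in> E \<and> (v, xs ! Suc i) \<in> E))
      \<or> \<not> (\<exists>v. (last xs, v) \<in> E)
      \<or> length xs \<le> 2
      \<or> (\<exists>i. 1 \<le> i \<and> Suc (Suc i) < length xs \<and> (xs ! i, xs ! Suc (Suc i)) \<notin> E)}"

definition update :: "real \<Rightarrow> (nat \<Rightarrow> nat) \<Rightarrow> (nat \<Rightarrow> 'v \<times> 'v \<Rightarrow> nat \<Rightarrow> real) \<Rightarrow> 'v list set \<Rightarrow> 'v list \<Rightarrow> 'v list set" where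
  "update r km w P x' =
     (if \<exists>m\<in>{1,2}. \<not> (\<exists>z\<in>P. last z = last x' \<and>
                          (dom_strict km w m z x' \<or> box_strict r km w m z x'))
      then (P - {z\<in>P. last z = last x' \<and> box_weak r km w 1 x' z \<and> box_weak r km w 2 x' z}) \<union> {x'}
      else P)"

definition next_gen :: "('v \<times> 'v) set \<Rightarrow> real \<Rightarrow> (nat \<Rightarrow> nat) \<Rightarrow> (nat \<Rightarrow> 'v \<times> 'v \<Rightarrow> nat \<Rightarrow> real)
                        \<Rightarrow> 'v list set \<Rightarrow> 'v list set \<Rightarrow> bool" where
  "next_gen E r km w P P' \<longleftrightarrow> (\<exists>x\<in>P. \<exists>x'\<in>mutations E x. P' = update r km w P x')"

end

theory Submission
  imports Defs
begin

abbreviation chain where "chain E xs \<equiv> successively (\<lambda>a b. (a,b) \<in> E) xs"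

lemma chain_split:
  assumes "chain E xs" shows "chain E (take n xs)" "chain E (drop n xs)"
proof -
  have "chain E (take n xs @ drop n xs)" using assms by simp
  thus "chain E (take n xs)" "chain E (drop n xs)" unfolding successively_append_iff by auto
qed

lemma mut_chain:
  assumes "chain E xs" "xs \<noteq> []" "y \<in> mutations E xs"
  shows "chain E y"
  using assms(3) unfolding mutations_def
proof (elim UnE CollectE exE conjE)
  fix i v assume y: "y = take (Suc i) xs @ [v] @ drop (Suc i) xs" and i: "Suc i < length xs"
    and e1: "(xs ! i, v) \<in> E" and e2: "(v, xs ! Suc i) \<in> E"
  have l: "last (take (Suc i) xs) = xs ! i" using i by (simp add: take_Suc_conv_app_nth)
  have h: "hd (drop (Suc i) xs) = xs ! Suc i" using i by (simp add: hd_drop_conv_nth)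
  show "chain E y" unfolding y successively_append_iff
    using chain_split[OF assms(1)] l h e1 e2 i by (auto simp: successively_Cons)
next
  fix v assume "y = xs @ [v]" "(last xs, v) \<in> E"
  then show "chain E y" using assms(1,2) by (simp add: successively_append_iff)
next
  fix i assume y: "y = take (Suc i) xs @ drop (Suc (Suc i)) xs" and i: "Suc (Suc i) < length xs"
    and e: "(xs ! i, xs ! Suc (Suc i)) \<in> E"
  have l: "last (take (Suc i) xs) = xs ! i" using i by (simp add: take_Suc_conv_app_nth)
  have h: "hd (drop (Suc (Suc i)) xs) = xs ! Suc (Suc i)" using i by (simp add: hd_drop_conv_nth)
  show "chain E y" unfolding y successively_append_iff
    using chain_split[OF assms(1)] l h e i by auto
next
  fix u assume "y = butlast xs"
  then show "chain E y" using chain_split[OF assms(1), of "length xs - 1"] by (simp add: butlast_conv_take)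
next
  fix u assume "y = xs" then show "chain E y" using assms by simp
qed

lemma obj_nonneg:
  assumes "chain E xs" "\<forall>m\<in>{1,2}. \<forall>e\<in>E. \<forall>k<km m. w m e k \<ge> 1" "m \<in> {1,2}" "k < km m"
  shows "obj w m k xs \<ge> 0"
proof -
  have "\<forall>e\<in>set (zip xs (tl xs)). e \<in> E"
    using assms(1) unfolding successively_conv_nth
    by (auto simp: set_zip nth_tl)
  then have "\<forall>e\<in>set (zip xs (tl xs)). w m e k \<ge> 0" using assms(2-4) by force
  then show ?thesis unfolding obj_def by (intro sum_list_nonneg) auto
qed

lemma box_bound:
  fixes a b :: real
  assumes r: "r > 1" and a: "a \<ge> 0" and b: "b \<ge> 0"
    and le: "(if a = 0 then -\<infinity> else ereal (real_of_int \<lfloor>log r a\<rfloor>))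
            \<le> (if b = 0 then -\<infinity> else ereal (real_of_int \<lfloor>log r b\<rfloor>))"
  shows "a \<le> r * b"
proof (cases "a = 0")
  case True thus ?thesis using r b by simp
next
  case False
  then have a0: "a > 0" using a by simp
  have b0: "b > 0" using le False b by (cases "b = 0") auto
  have "\<lfloor>log r a\<rfloor> \<le> \<lfloor>log r b\<rfloor>" using le False b0 by auto
  then have "log r a < log r b + 1" by linarith
  also have "log r b + 1 = log r (r * b)" using r b0 by (simp add: log_mult)
  finally have "log r a < log r (r*b)" .
  then show ?thesis using r a0 b0 by simp
qed

lemma butlast_ne: "3 \<le> length xs \<Longrightarrow> butlast xs \<noteq> []"
  by (cases xs rule: rev_cases) auto

lemma butlast_ne2: "3 \<le> length xs \<Longrightarrow> [] \<noteq> butlast xs"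
  using butlast_ne by metis

lemma inv_chain:
  assumes "(next_gen E r km w)\<^sup>*\<^sup>* P0 P" "\<forall>z\<in>P0. chain E z \<and> z \<noteq> []"
  shows "\<forall>z\<in>P. chain E z \<and> z \<noteq> []"
  using assms
proof (induction rule: rtranclp_induct)
  case base thus ?case by simp
next
  case (step Q Q')
  then obtain x x' where x: "x \<in> Q" "x' \<in> mutations E x" "Q' = update r km w Q x'"
    unfolding next_gen_def by blast
  have "chain E x'" using mut_chain[of E x x'] x step by auto
  moreover have "x \<noteq> []" using step x by auto
  then have "x' \<noteq> []" using x(2) unfolding mutations_def
    by (auto simp: Suc_le_eq butlast_ne butlast_ne2)
  ultimately show ?case using step x unfolding update_def by auto
qed

theorem lemma9:
  fixes V :: "'v set" and E :: "('v \<times> 'v) set" and s :: 'v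
    and km :: "nat \<Rightarrow> nat" and w :: "nat \<Rightarrow> 'v \<times> 'v \<Rightarrow> nat \<Rightarrow> real"
    and r :: real and P P' :: "'v list set" and x :: "'v list" and j :: nat
  assumes "finite V" and "E \<subseteq> V \<times> V" and "s \<in> V"
    and "\<forall>m\<in>{1,2}. \<forall>e\<in>E. \<forall>k<km m. w m e k \<ge> 1"
    and "r > 1"
    and "(next_gen E r km w)\<^sup>*\<^sup>* {[s]} P"
    and "next_gen E r km w P P'"
    and "is_path V E s x"
    and "\<exists>z\<in>P. last z = last x \<and> (\<forall>m\<in>{1,2}. approx_dom (r ^ j) km w m z x)"
  shows "\<exists>z'\<in>P'. last z' = last x \<and> (\<forall>m\<in>{1,2}. approx_dom (r ^ (j+1)) km w m z' x)"
proof -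
  have invP: "\<forall>z\<in>P. chain E z \<and> z \<noteq> []" using inv_chain[OF assms(6)] by simp
  have cx: "chain E x" using assms(8) unfolding is_path_def successively_conv_nth by auto
  obtain z where z: "z \<in> P" "last z = last x" "\<forall>m\<in>{1,2}. approx_dom (r ^ j) km w m z x"
    using assms(9) by blast
  obtain y x' where y: "y \<in> P" "x' \<in> mutations E y" "P' = update r km w P x'"
    using assms(7) unfolding next_gen_def by blast
  have cx': "chain E x'" using mut_chain[of E y x'] y invP by auto
  have cz: "chain E z" using invP z by auto
  have rj: "r ^ j \<le> r ^ (j+1)" using assms(5) by (simp add: power_increasing)
  have zgood: "\<forall>m\<in>{1,2}. approx_dom (r ^ (j+1)) km w m z x"
  proof (intro ballI)
    fix m assume m: "m \<in> {1,2::nat}"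
    show "approx_dom (r ^ (j+1)) km w m z x" unfolding approx_dom_def
    proof (intro allI impI)
      fix k assume k: "k < km m"
      have "obj w m k z \<le> r ^ j * obj w m k x" using z(3) m k unfolding approx_dom_def by blast
      also have "\<dots> \<le> r ^ (j+1) * obj w m k x"
        using rj obj_nonneg[OF cx assms(4) m k] by (intro mult_right_mono) auto
      finally show "obj w m k z \<le> r ^ (j+1) * obj w m k x" .
    qed
  qed
  show ?thesis
  proof (cases "z \<in> P'")
    case True thus ?thesis using z zgood by blast
  next
    case False
    then have rem: "last z = last x' \<and> box_weak r km w 1 x' z \<and> box_weak r km w 2 x' z"
      and xin: "x' \<in> P'"
      using y(3) z(1) unfolding update_def by (auto split: if_splits)
    have "\<forall>m\<in>{1,2}. approx_dom (r ^ (j+1)) km w m x' x"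
    proof (intro ballI)
      fix m assume m: "m \<in> {1,2::nat}"
      have bw: "box_weak r km w m x' z" using rem m by auto
      show "approx_dom (r ^ (j+1)) km w m x' x" unfolding approx_dom_def
      proof (intro allI impI)
        fix k assume k: "k < km m"
        have "obj w m k x' \<le> r * obj w m k z"
          using box_bound[OF assms(5) obj_nonneg[OF cx' assms(4) m k] obj_nonneg[OF cz assms(4) m k]]
            bw k unfolding box_weak_def box_def by blast
        also have "\<dots> \<le> r * (r ^ j * obj w m k x)"
          using z(3) m k assms(5) unfolding approx_dom_def by (intro mult_left_mono) auto
        finally show "obj w m k x' \<le> r ^ (j+1) * obj w m k x" by (simp add: mult.assoc)
      qed
    qed
    then show ?thesis using xin rem z(2) by auto
  qed
qed

end
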